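(* Let $n\ge 1$, let $x_1<x_2<\dots<x_n$ be real numbers and $m_1,\dots,m_n>0$, and define $s_k=\sum_{j=1}^n m_j x_j^k$ for $k=0,1,2,\dots$. Let $D_{n-1}=\det(s_{i+j})_{0\le i,j\le n-1}$. Let $p\ge 1$ be an integer and let $(a_{i,j})_{0\le i,j\le n+p}$ be a real $(n+p+1)\times(n+p+1)$ matrix such that $a_{i,j}=s_{i+j}$ whenever $i+j\le 2n+p-1$, while the entries with $i+j\ge 2n+p$ are arbitrary real numbers. Write $y_j=a_{n+j,\,n+p-j}$ for $j=0,1,\dots,p$ (these are exactly the entries with $i+j=2n+p$). Then $$\det(a_{i,j})_{0\le i,j\le n+p}=(-1)^{p(p+1)/2}\,D_{n-1}\prod_{j=0}^{p}\bigl(y_j-s_{2n+p}\bigr).$$ In particular, this determinant does not depend on the entries $a_{i,j}$ with $i+j\ge 2n+p+1$.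
   Context: Here $s_{2n+p}=\sum_{j=1}^n m_j x_j^{2n+p}$ is the moment of the discrete measure, not an entry of the matrix. *)

theory Defs
  imports "Jordan_Normal_Form.Determinant"
begin

definition moment :: "nat \<Rightarrow> (nat \<Rightarrow> real) \<Rightarrow> (nat \<Rightarrow> real) \<Rightarrow> nat \<Rightarrow> real" where
  "moment n m x k = (\<Sum>j=1..n. m j * x j ^ k)"

end

theory Submission
  imports Defs "HOL-Computational_Algebra.Polynomial"
begin

lemma anti_det:
  fixes D :: "real mat"
  shows "D \<in> carrier_mat (Suc k) (Suc k) \<Longrightarrow>
    (\<And>a b. a < Suc k \<Longrightarrow> b < Suc k \<Longrightarrow> a + b < k \<Longrightarrow> D $$ (a, b) = 0) \<Longrightarrow>
    det D = (-1) ^ (k * (k + 1) div 2) * (\<Prod>j=0..k. D $$ (j, k - j))"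
proof (induction k arbitrary: D)
  case 0
  have "det D = (\<Sum>j<1. D $$ (0,j) * cofactor D 0 j)"
    using laplace_expansion_row[OF 0(1)] by simp
  also have "\<dots> = D $$ (0,0)" unfolding cofactor_def
    using det_dim_zero[OF mat_delete_carrier[OF 0(1), simplified]] by simp
  finally show ?case by simp
next
  case (Suc k)
  have "det D = (\<Sum>j<Suc (Suc k). D $$ (0,j) * cofactor D 0 j)"
    using laplace_expansion_row[OF Suc(2)] by simp
  also have "\<dots> = D $$ (0, Suc k) * cofactor D 0 (Suc k)"
    using Suc(3) by (simp add: sum.lessThan_Suc[of _ "Suc k"])
  finally have e1: "det D = D $$ (0, Suc k) * cofactor D 0 (Suc k)" .
  define E where "E = mat_delete D 0 (Suc k)"
  have Ec: "E \<in> carrier_mat (Suc k) (Suc k)" unfolding E_def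
    using mat_delete_carrier[OF Suc(2)] by simp
  have Ei: "E $$ (a,b) = D $$ (Suc a, b)" if "a < Suc k" "b < Suc k" for a b
    using that Suc(2) unfolding E_def mat_delete_def by auto
  have "det E = (-1) ^ (k * (k + 1) div 2) * (\<Prod>j=0..k. E $$ (j, k - j))"
    by (rule Suc(1)[OF Ec]) (simp add: Ei Suc(3))
  also have "(\<Prod>j=0..k. E $$ (j, k - j)) = (\<Prod>j=0..k. D $$ (Suc j, Suc k - Suc j))"
    by (rule prod.cong) (auto simp: Ei)
  also have "\<dots> = (\<Prod>j=Suc 0..Suc k. D $$ (j, Suc k - j))"
    by (rule prod.shift_bounds_cl_Suc_ivl[symmetric])
  finally have e2: "det E = (-1) ^ (k * (k + 1) div 2) * (\<Prod>j=1..Suc k. D $$ (j, Suc k - j))" by simp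
  have pr: "(\<Prod>j=0..Suc k. D $$ (j, Suc k - j)) = D $$ (0, Suc k) * (\<Prod>j=1..Suc k. D $$ (j, Suc k - j))"
    by (simp add: prod.atLeast_Suc_atMost)
  have sg: "Suc k * (Suc k + 1) div 2 = Suc k + k * (k + 1) div 2"
  proof -
    have "Suc k * (Suc k + 1) = 2 * Suc k + k * (k+1)" by (simp add: algebra_simps)
    moreover have "even (k * (k+1))" by simp
    ultimately show ?thesis by auto
  qed
  show ?case unfolding e1 cofactor_def E_def[symmetric] e2 pr sg power_add by simp
qed

definition qpol :: "nat \<Rightarrow> (nat \<Rightarrow> real) \<Rightarrow> real poly" where
  "qpol n x = (\<Prod>j\<in>{1..n}. [:- x j, 1:])"

lemma qpol_degree: "degree (qpol n x) = n"
  unfolding qpol_def by (subst degree_prod_eq_sum_degree) auto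

lemma qpol_lead: "coeff (qpol n x) n = 1"
  using lead_coeff_prod[of "\<lambda>j. [:- x j, 1:]" "{1..n}"] qpol_degree[of n x]
  unfolding qpol_def by simp

lemma qpol_root: "1 \<le> j \<Longrightarrow> j \<le> n \<Longrightarrow> poly (qpol n x) (x j) = 0"
  unfolding qpol_def poly_prod by (rule prod_zero) auto

lemma moment_rec:
  "(\<Sum>k=0..n. coeff (qpol n x) k * moment n m x (k + l)) = 0"
proof -
  have "(\<Sum>k=0..n. coeff (qpol n x) k * moment n m x (k + l))
     = (\<Sum>j=1..n. m j * x j ^ l * (\<Sum>k=0..n. coeff (qpol n x) k * x j ^ k))"
    unfolding moment_def sum_distrib_left
    by (subst sum.swap) (auto intro!: sum.cong simp: power_add algebra_simps)
  also have "\<dots> = 0"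
  proof (rule sum.neutral, clarify)
    fix j assume "j \<in> {1..n}"
    then have "poly (qpol n x) (x j) = 0" by (intro qpol_root) auto
    then have "(\<Sum>k=0..n. coeff (qpol n x) k * x j ^ k) = 0"
      unfolding poly_altdef qpol_degree atLeast0AtMost .
    then show "m j * x j ^ l * (\<Sum>k=0..n. coeff (qpol n x) k * x j ^ k) = 0" by simp
  qed
  finally show ?thesis .
qed

theorem lemma2p3:
  fixes n p :: nat and x m :: "nat \<Rightarrow> real" and A :: "real mat"
  assumes "n \<ge> 1" and "p \<ge> 1"
    and "\<And>i j. 1 \<le> i \<Longrightarrow> i < j \<Longrightarrow> j \<le> n \<Longrightarrow> x i < x j"
    and "\<And>j. 1 \<le> j \<Longrightarrow> j \<le> n \<Longrightarrow> m j > 0"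
    and "A \<in> carrier_mat (n + p + 1) (n + p + 1)"
    and "\<And>i j. i \<le> n + p \<Longrightarrow> j \<le> n + p \<Longrightarrow> i + j \<le> 2 * n + p - 1 \<Longrightarrow>
            A $$ (i, j) = moment n m x (i + j)"
  shows "det A = (-1) ^ (p * (p + 1) div 2)
           * det (mat n n (\<lambda>(i, j). moment n m x (i + j)))
           * (\<Prod>j=0..p. A $$ (n + j, n + p - j) - moment n m x (2 * n + p))"
proof -
  define N where "N = n + p + 1"
  define s where "s = moment n m x"
  define c where "c = coeff (qpol n x)"
  have Ac: "A \<in> carrier_mat N N" using assms(5) N_def by simp
  have As: "A $$ (i, j) = s (i + j)" if "i < N" "j < N" "i + j < 2 * n + p" for i j
    using assms(6)[of i j] that unfolding N_def s_def by auto
  have cn: "c n = 1" unfolding c_def by (rule qpol_lead)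
  have cbig: "c k = 0" if "k > n" for k
    unfolding c_def using qpol_degree[of n x] that by (simp add: coeff_eq_0)
  have rec: "(\<Sum>k=0..n. c k * s (k + l)) = 0" for l
    unfolding c_def s_def by (rule moment_rec)
  define T where "T = mat N N (\<lambda>(r, j). if j < n then (if r = j then 1 else 0)
      else if j - n \<le> r then c (r - (j - n)) else (0::real))"
  have Tc: "T \<in> carrier_mat N N" unfolding T_def by simp
  have Tut: "upper_triangular T"
    unfolding upper_triangular_def T_def by (auto intro!: cbig)
  have "det T = prod_list (diag_mat T)" by (rule det_upper_triangular[OF Tut Tc])
  also have "diag_mat T = map (\<lambda>i. 1) [0..<N]"
    unfolding diag_mat_def T_def by (auto simp: cn)
  finally have detT: "det T = 1" by (simp add: map_replicate_const)
  define B where "B = A * T"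
  have Bc: "B \<in> carrier_mat N N" unfolding B_def using Ac Tc by auto
  have detB: "det B = det A" unfolding B_def using det_mult[OF Ac Tc] detT by simp
  have Blow: "B $$ (i, j) = A $$ (i, j)" if "i < N" "j < N" "j < n" for i j
  proof -
    have "B $$ (i, j) = (\<Sum>r\<in>{0..<N}. A $$ (i, r) * T $$ (r, j))"
      unfolding B_def using that Ac Tc by (simp add: scalar_prod_def)
    also have "\<dots> = (\<Sum>r\<in>{0..<N}. if r = j then A $$ (i, r) else 0)"
    proof (rule sum.cong[OF refl])
      fix r assume "r \<in> {0..<N}"
      then have "T $$ (r, j) = (if r = j then 1 else 0)" unfolding T_def using that by simp
      then show "A $$ (i, r) * T $$ (r, j) = (if r = j then A $$ (i, r) else 0)" by simp
    qed
    also have "\<dots> = A $$ (i, j)" using that by simp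
    finally show ?thesis .
  qed
  have Bhigh: "B $$ (i, j) = (\<Sum>k=0..n. c k * A $$ (i, j - n + k))" if "i < N" "j < N" "n \<le> j" for i j
  proof -
    have "B $$ (i, j) = (\<Sum>r\<in>{0..<N}. A $$ (i, r) * T $$ (r, j))"
      unfolding B_def using that Ac Tc by (simp add: scalar_prod_def)
    also have "\<dots> = (\<Sum>r\<in>{0..<N}. if j - n \<le> r then A $$ (i, r) * c (r - (j - n)) else 0)"
    proof (rule sum.cong[OF refl])
      fix r assume "r \<in> {0..<N}"
      then have "T $$ (r, j) = (if j - n \<le> r then c (r - (j - n)) else 0)" unfolding T_def using that by simp
      then show "A $$ (i, r) * T $$ (r, j) = (if j - n \<le> r then A $$ (i, r) * c (r - (j - n)) else 0)" by simp
    qed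
    also have "\<dots> = (\<Sum>r\<in>{j-n..j}. A $$ (i, r) * c (r - (j - n)))"
      by (rule sum.mono_neutral_cong_right) (use that in \<open>auto intro!: cbig\<close>)
    also have "{j-n..j} = {0 + (j - n)..n + (j - n)}" using that by simp
    also have "(\<Sum>r\<in>{0 + (j - n)..n + (j - n)}. A $$ (i, r) * c (r - (j - n)))
        = (\<Sum>k=0..n. A $$ (i, k + (j - n)) * c k)"
      by (subst sum.shift_bounds_cl_nat_ivl) simp
    also have "\<dots> = (\<Sum>k=0..n. c k * A $$ (i, j - n + k))"
      by (simp add: add.commute mult.commute)
    finally show ?thesis .
  qed
  have Bzero: "B $$ (i, j) = 0" if "i < n" "j < N" "n \<le> j" for i j
  proof -
    have "B $$ (i, j) = (\<Sum>k=0..n. c k * A $$ (i, j - n + k))"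
      by (rule Bhigh) (use that in \<open>auto simp: N_def\<close>)
    also have "\<dots> = (\<Sum>k=0..n. c k * s (k + (i + j - n)))"
    proof (intro sum.cong refl)
      fix k assume k: "k \<in> {0..n}"
      have "A $$ (i, j - n + k) = s (i + (j - n + k))" by (rule As) (use that k in \<open>auto simp: N_def\<close>)
      moreover have "i + (j - n + k) = k + (i + j - n)" using that by simp
      ultimately show "c k * A $$ (i, j - n + k) = c k * s (k + (i + j - n))" by simp
    qed
    finally show ?thesis using rec by simp
  qed
  have Bdiag: "B $$ (n + a, n + b) = 0" if "a \<le> p" "b \<le> p" "a + b < p" for a b
  proof -
    have "B $$ (n + a, n + b) = (\<Sum>k=0..n. c k * A $$ (n + a, n + b - n + k))"
      by (rule Bhigh) (use that in \<open>auto simp: N_def\<close>)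
    also have "\<dots> = (\<Sum>k=0..n. c k * s (k + (2 * n + a + b - n)))"
    proof (intro sum.cong refl)
      fix k assume k: "k \<in> {0..n}"
      have "A $$ (n + a, n + b - n + k) = s (n + a + (n + b - n + k))" by (rule As) (use that k in \<open>auto simp: N_def\<close>)
      moreover have "n + a + (n + b - n + k) = k + (2 * n + a + b - n)" by simp
      ultimately show "c k * A $$ (n + a, n + b - n + k) = c k * s (k + (2 * n + a + b - n))" by metis
    qed
    finally show ?thesis using rec by simp
  qed
  have Banti: "B $$ (n + a, n + (p - a)) = A $$ (n + a, n + p - a) - s (2 * n + p)" if "a \<le> p" for a
  proof -
    have "B $$ (n + a, n + (p - a)) = (\<Sum>k=0..n. c k * A $$ (n + a, p - a + k))"
      using Bhigh[of "n+a" "n+(p-a)"] that by (simp add: N_def)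
    also have "\<dots> = (\<Sum>k<n. c k * A $$ (n + a, p - a + k)) + c n * A $$ (n + a, p - a + n)"
      by (simp add: atLeast0AtMost lessThan_Suc_atMost[symmetric])
    also have "(\<Sum>k<n. c k * A $$ (n + a, p - a + k)) = (\<Sum>k<n. c k * s (k + (n + p)))"
    proof (intro sum.cong refl)
      fix k assume k: "k \<in> {..<n}"
      have "A $$ (n + a, p - a + k) = s (n + a + (p - a + k))" by (rule As) (use that k in \<open>auto simp: N_def\<close>)
      moreover have "n + a + (p - a + k) = k + (n + p)" using that by simp
      ultimately show "c k * A $$ (n + a, p - a + k) = c k * s (k + (n + p))" by metis
    qed
    also have "(\<Sum>k<n. c k * s (k + (n + p))) = - s (2 * n + p)"
    proof -
      have "(\<Sum>k=0..n. c k * s (k + (n + p))) = 0" by (rule rec)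
      then have "(\<Sum>k<n. c k * s (k + (n + p))) + c n * s (n + (n + p)) = 0"
        by (simp add: atLeast0AtMost lessThan_Suc_atMost[symmetric])
      moreover have "n + (n + p) = 2 * n + p" by simp
      ultimately show ?thesis using cn by (metis add_eq_0_iff2 mult_1)
    qed
    finally show ?thesis using cn that by (simp add: add.commute)
  qed
  define H where "H = mat n n (\<lambda>(i, j). s (i + j))"
  define C where "C = mat (p+1) n (\<lambda>(i, j). B $$ (n + i, j))"
  define D where "D = mat (p+1) (p+1) (\<lambda>(i, j). B $$ (n + i, n + j))"
  have Bblock: "B = four_block_mat H (0\<^sub>m n (p+1)) C D"
  proof (rule eq_matI)
    show "dim_row B = dim_row (four_block_mat H (0\<^sub>m n (p+1)) C D)"
      "dim_col B = dim_col (four_block_mat H (0\<^sub>m n (p+1)) C D)"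
      using Bc by (auto simp: H_def C_def D_def N_def)
  next
    fix i j assume ij: "i < dim_row (four_block_mat H (0\<^sub>m n (p+1)) C D)"
      "j < dim_col (four_block_mat H (0\<^sub>m n (p+1)) C D)"
    then have i: "i < N" and j: "j < N" by (auto simp: H_def D_def N_def)
    show "B $$ (i, j) = four_block_mat H (0\<^sub>m n (p+1)) C D $$ (i, j)"
      using ij i j Blow Bzero As
      by (auto simp: H_def C_def D_def N_def)
  qed
  have "det B = det H * det D"
    unfolding Bblock
    by (rule det_four_block_mat_upper_right_zero) (auto simp: H_def C_def D_def)
  moreover have "det D = (-1) ^ (p * (p + 1) div 2) * (\<Prod>j=0..p. D $$ (j, p - j))"
    by (rule anti_det) (auto simp: D_def Bdiag)
  moreover have "(\<Prod>j=0..p. D $$ (j, p - j)) = (\<Prod>j=0..p. A $$ (n + j, n + p - j) - s (2 * n + p))"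
  proof (rule prod.cong[OF refl])
    fix j assume "j \<in> {0..p}"
    then have j: "j \<le> p" by simp
    then have "n + p - j = n + (p - j)" by simp
    then show "D $$ (j, p - j) = A $$ (n + j, n + p - j) - s (2 * n + p)"
      using Banti[OF j] j by (simp add: D_def)
  qed
  ultimately show ?thesis using detB unfolding H_def s_def by simp
qed

end
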